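(* Let $n\ge1$ players all have the same valuation $v$ on a finite set of goods $M$. Assume $v$ has nonzero marginal utility: $v(S\cup\{g\})>v(S)$ for every $S\subsetneq M$ and $g\notin S$. Then every leximin solution is both EFX and Pareto optimal.
   Context: A valuation is a function $v:2^M\to\mathbb{R}_{\ge0}$ with $v(\emptyset)=0$ that is monotone: $v(S)\le v(T)$ whenever $S\subseteq T$. An allocation is an ordered partition $(A_1,\dots,A_n)$ of $M$; parts may be empty. It is EFX if for all players $i,j$ and every $g\in A_j$ we have $v_i(A_i)\ge v_i(A_j\setminus\{g\})$. It is Pareto optimal (PO) if there is no allocation $B$ with $v_i(B_i)\ge v_i(A_i)$ for all $i$ and $v_j(B_j)>v_j(A_j)$ for some $j$. For an allocation $A$, let $X^A$ be the ordering of the players by increasing utility $v_i(A_i)$, with ties broken by increasing player index. The leximin comparison is defined as follows. For allocations $A$ and $B$, let $\ell$ be the first index at which $v_{X^A_\ell}(A_{X^A_\ell})\ne v_{X^B_\ell}(B_{X^B_\ell})$. Then $A\prec B$ holds if and only if such an $\ell$ exists and $v_{X^A_\ell}(A_{X^A_\ell})< v_{X^B_\ell}(B_{X^B_\ell})$. Equivalently, the sorted utility vector of $A$ is lexicographically smaller than that of $B$. A leximin solution is an allocation $A$ with no allocation $B$ satisfying $A\prec B$. *)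

theory Defs
  imports Complex_Main
begin

definition valuation :: "'g set \<Rightarrow> ('g set \<Rightarrow> real) \<Rightarrow> bool" where
  "valuation M v \<longleftrightarrow> v {} = 0 \<and> (\<forall>S. S \<subseteq> M \<longrightarrow> v S \<ge> 0)
     \<and> (\<forall>S T. S \<subseteq> T \<and> T \<subseteq> M \<longrightarrow> v S \<le> v T)"

definition nonzero_marginal :: "'g set \<Rightarrow> ('g set \<Rightarrow> real) \<Rightarrow> bool" where
  "nonzero_marginal M v \<longleftrightarrow> (\<forall>S g. S \<subset> M \<and> g \<in> M \<and> g \<notin> S \<longrightarrow> v (S \<union> {g}) > v S)"

definition allocation :: "nat \<Rightarrow> 'g set \<Rightarrow> (nat \<Rightarrow> 'g set) \<Rightarrow> bool" where
  "allocation n M A \<longleftrightarrow> (\<Union>i<n. A i) = M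
     \<and> (\<forall>i<n. \<forall>j<n. i \<noteq> j \<longrightarrow> A i \<inter> A j = {})"

definition EFX :: "nat \<Rightarrow> (nat \<Rightarrow> 'g set \<Rightarrow> real) \<Rightarrow> (nat \<Rightarrow> 'g set) \<Rightarrow> bool" where
  "EFX n vs A \<longleftrightarrow> (\<forall>i<n. \<forall>j<n. \<forall>g\<in>A j. vs i (A i) \<ge> vs i (A j - {g}))"

definition pareto_optimal :: "nat \<Rightarrow> 'g set \<Rightarrow> (nat \<Rightarrow> 'g set \<Rightarrow> real) \<Rightarrow> (nat \<Rightarrow> 'g set) \<Rightarrow> bool" where
  "pareto_optimal n M vs A \<longleftrightarrow> \<not> (\<exists>B. allocation n M B \<and> (\<forall>i<n. vs i (B i) \<ge> vs i (A i))
        \<and> (\<exists>j<n. vs j (B j) > vs j (A j)))"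

definition util_vec :: "nat \<Rightarrow> (nat \<Rightarrow> 'g set \<Rightarrow> real) \<Rightarrow> (nat \<Rightarrow> 'g set) \<Rightarrow> real list" where
  "util_vec n vs A = sort (map (\<lambda>i. vs i (A i)) [0..<n])"

definition leximin_less :: "nat \<Rightarrow> (nat \<Rightarrow> 'g set \<Rightarrow> real) \<Rightarrow> (nat \<Rightarrow> 'g set) \<Rightarrow> (nat \<Rightarrow> 'g set) \<Rightarrow> bool" where
  "leximin_less n vs A B \<longleftrightarrow> (\<exists>l<n. (\<forall>k<l. util_vec n vs A ! k = util_vec n vs B ! k)
        \<and> util_vec n vs A ! l < util_vec n vs B ! l)"

definition leximin :: "nat \<Rightarrow> 'g set \<Rightarrow> (nat \<Rightarrow> 'g set \<Rightarrow> real) \<Rightarrow> (nat \<Rightarrow> 'g set) \<Rightarrow> bool" where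
  "leximin n M vs A \<longleftrightarrow> allocation n M A \<and> \<not> (\<exists>B. allocation n M B \<and> leximin_less n vs A B)"

end

theory Submission
  imports Defs "HOL-Library.Multiset"
begin

lemma sort_split:
  "sort (xs::real list) = sort (filter (\<lambda>x. x \<le> a) xs) @ sort (filter (\<lambda>x. \<not> x \<le> a) xs)"
  apply (rule properties_for_sort)
   apply (simp add: multiset_partition[symmetric])
  apply (auto simp: sorted_append)
  done

lemma key:
  fixes L L' :: "real list"
  assumes len: "length L = n" "length L' = n"
    and ms: "mset (filter (\<lambda>x. x \<le> a) L) = mset (filter (\<lambda>x. x \<le> a) L') + replicate_mset m a"
    and m: "m \<ge> 1"
    and big: "\<exists>x\<in>set L'. x > a"
  shows "\<exists>l<n. (\<forall>k<l. sort L ! k = sort L' ! k) \<and> sort L ! l < sort L' ! l"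
proof -
  define F where "F = sort (filter (\<lambda>x. x \<le> a) L')"
  define G where "G = sort (filter (\<lambda>x. \<not> x \<le> a) L)"
  define G' where "G' = sort (filter (\<lambda>x. \<not> x \<le> a) L')"
  have e1: "sort (filter (\<lambda>x. x \<le> a) L) = F @ replicate m a"
    unfolding F_def apply (rule properties_for_sort) using ms by (auto simp: sorted_append)
  have sL: "sort L = F @ replicate m a @ G" using sort_split[of L a] e1 G_def by simp
  have sL': "sort L' = F @ G'" using sort_split[of L' a] F_def G'_def by simp
  have "set G' \<noteq> {}" using big by (auto simp: G'_def)
  then have "G' \<noteq> []" by auto
  then have "G' ! 0 \<in> set G'" by simp
  then have g0: "G' ! 0 > a" unfolding G'_def by simp
  have "length (sort L) = n" using len by simp
  then have ln: "length F < n" using sL m by simp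
  show ?thesis
  proof (intro exI conjI allI impI)
    show "length F < n" by (rule ln)
    fix k assume "k < length F"
    then show "sort L ! k = sort L' ! k" unfolding sL sL' by (simp add: nth_append)
  next
    have "sort L ! length F = a" unfolding sL using m by (simp add: nth_append)
    moreover have "sort L' ! length F = G' ! 0" unfolding sL' by (simp add: nth_append)
    ultimately show "sort L ! length F < sort L' ! length F" using g0 by simp
  qed
qed

lemma mset_filter_map:
  "mset (filter (\<lambda>x. x \<le> a) (map (u::nat\<Rightarrow>real) [0..<n])) = image_mset u (mset_set {i. i<n \<and> u i \<le> a})"
proof -
  have "filter (\<lambda>x. x \<le> a) (map u [0..<n]) = map u (filter (\<lambda>i. u i \<le> a) [0..<n])"
    by (simp add: filter_map o_def)
  moreover have "mset (filter (\<lambda>i. u i \<le> a) [0..<n]) = mset_set {i. i<n \<and> u i \<le> a}"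
  proof -
    have "set (filter (\<lambda>i. u i \<le> a) [0..<n]) = {i. i<n \<and> u i \<le> a}" by auto
    then show ?thesis using mset_set_set[of "filter (\<lambda>i. u i \<le> a) [0..<n]"] by simp
  qed
  ultimately show ?thesis by simp
qed

lemma util_key:
  fixes u w :: "nat \<Rightarrow> real"
  assumes S: "{i. i<n \<and> u i \<le> a} = {i. i<n \<and> w i \<le> a} \<union> E"
    and D: "{i. i<n \<and> w i \<le> a} \<inter> E = {}" and Ea: "\<forall>i\<in>E. u i = a" and En: "E \<noteq> {}"
    and uw: "\<forall>i. i<n \<and> w i \<le> a \<longrightarrow> u i = w i" and j: "j<n" "w j > a"
  shows "\<exists>l<n. (\<forall>k<l. sort (map u [0..<n]) ! k = sort (map w [0..<n]) ! k)
            \<and> sort (map u [0..<n]) ! l < sort (map w [0..<n]) ! l"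
proof (rule key[where m="card E" and a=a])
  have fE: "finite E" using S by (metis (no_types, lifting) finite_Un finite_nat_set_iff_bounded mem_Collect_eq)
  show "1 \<le> card E" using fE En by (simp add: Suc_le_eq card_gt_0_iff)
  show "\<exists>x\<in>set (map w [0..<n]). a < x" using j by auto
  show "length (map u [0..<n]) = n" "length (map w [0..<n]) = n" by auto
  have "image_mset u (mset_set {i. i<n \<and> u i \<le> a})
      = image_mset u (mset_set {i. i<n \<and> w i \<le> a}) + image_mset u (mset_set E)"
    unfolding S using fE D by (simp add: mset_set_Union)
  also have "image_mset u (mset_set {i. i<n \<and> w i \<le> a}) = image_mset w (mset_set {i. i<n \<and> w i \<le> a})"
    by (rule image_mset_cong) (use uw in auto)
  also have "image_mset u (mset_set E) = image_mset (\<lambda>_. a) (mset_set E)"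
    by (rule image_mset_cong) (use Ea fE in auto)
  also have "\<dots> = replicate_mset (card E) a" by (simp add: image_mset_const_eq)
  finally show "mset (filter (\<lambda>x. x \<le> a) (map u [0..<n])) =
     mset (filter (\<lambda>x. x \<le> a) (map w [0..<n])) + replicate_mset (card E) a"
    unfolding mset_filter_map .
qed

theorem theorem5p4:
  fixes n :: nat and M :: "'g set" and v :: "'g set \<Rightarrow> real" and A :: "nat \<Rightarrow> 'g set"
  assumes "n \<ge> 1"
    and "finite M"
    and "valuation M v"
    and "nonzero_marginal M v"
    and "leximin n M (\<lambda>_. v) A"
  shows "EFX n (\<lambda>_. v) A \<and> pareto_optimal n M (\<lambda>_. v) A"
proof -
  have alloc: "allocation n M A" and nl: "\<And>B. allocation n M B \<Longrightarrow> \<not> leximin_less n (\<lambda>_. v) A B"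
    using assms(5) unfolding leximin_def by auto
  have mono: "\<And>S T. S \<subseteq> T \<Longrightarrow> T \<subseteq> M \<Longrightarrow> v S \<le> v T"
    using assms(3) unfolding valuation_def by blast
  have marg: "\<And>S g. S \<subset> M \<Longrightarrow> g \<in> M \<Longrightarrow> g \<notin> S \<Longrightarrow> v (S \<union> {g}) > v S"
    using assms(4) unfolding nonzero_marginal_def by blast
  have UA: "(\<Union>i<n. A i) = M" and disjA: "\<And>i j. i<n \<Longrightarrow> j<n \<Longrightarrow> i \<noteq> j \<Longrightarrow> A i \<inter> A j = {}"
    using alloc unfolding allocation_def by auto
  have sub: "\<And>i. i<n \<Longrightarrow> A i \<subseteq> M" using UA by blast
  have LL: "leximin_less n (\<lambda>_. v) A B" if B: "allocation n M B" and
     ex: "\<exists>l<n. (\<forall>k<l. sort (map (\<lambda>i. v (A i)) [0..<n]) ! k = sort (map (\<lambda>i. v (B i)) [0..<n]) ! k)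
            \<and> sort (map (\<lambda>i. v (A i)) [0..<n]) ! l < sort (map (\<lambda>i. v (B i)) [0..<n]) ! l" for B
    using ex unfolding leximin_less_def util_vec_def by simp
  have efx: "EFX n (\<lambda>_. v) A"
    unfolding EFX_def
  proof (intro allI impI ballI)
    fix i j g assume i: "i<n" and j: "j<n" and g: "g \<in> A j"
    show "v (A j - {g}) \<le> v (A i)"
    proof (rule ccontr)
      assume "\<not> ?thesis"
      then have lt: "v (A i) < v (A j - {g})" by simp
      show False
      proof (cases "i = j")
        case True
        then show False using mono[of "A j - {g}" "A j"] sub[OF j] lt by auto
      next
        case False
        have gM: "g \<in> M" using g sub[OF j] by blast
        have gi: "g \<notin> A i" using g disjA[OF i j False] by blast
        define B where "B = A(i := A i \<union> {g}, j := A j - {g})"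
        have Bi: "B i = A i \<union> {g}" and Bj: "B j = A j - {g}"
          and Bk: "\<And>k. k \<noteq> i \<Longrightarrow> k \<noteq> j \<Longrightarrow> B k = A k"
          using False by (auto simp: B_def)
        have allocB: "allocation n M B"
          unfolding allocation_def
        proof (intro conjI allI impI)
          show "(\<Union>k<n. B k) = M"
          proof
            show "(\<Union>k<n. B k) \<subseteq> M"
            proof (rule UN_least)
              fix k assume "k \<in> {..<n}"
              then show "B k \<subseteq> M" using sub gM Bi Bj Bk i j by (cases "k = i"; cases "k = j") auto
            qed
            show "M \<subseteq> (\<Union>k<n. B k)"
            proof
              fix x assume "x \<in> M"
              then obtain k where k: "k<n" "x \<in> A k" using UA by blast
              show "x \<in> (\<Union>k<n. B k)"
              proof (cases "x = g")
                case True then show ?thesis using i Bi by blast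
              next
                case False
                then have "x \<in> B k" using k Bi Bj Bk by (cases "k = i"; cases "k = j") auto
                then show ?thesis using k by blast
              qed
            qed
          qed
        next
          fix k l assume k: "k<n" and l: "l<n" and kl: "k \<noteq> l"
          have BA: "\<And>k. B k \<subseteq> A k \<union> (if k = i then {g} else {})"
            using Bi Bj Bk False by (metis Diff_subset Un_empty_right order_refl sup.coboundedI1)
          have gB: "m = i" if "m < n" "g \<in> B m" for m
          proof (rule ccontr)
            assume mi: "m \<noteq> i"
            show False
            proof (cases "m = j")
              case True then show False using that Bj by simp
            next
              case False
              then have "g \<in> A m" using that Bk mi by simp
              then show False using disjA[OF that(1) j False] g by blast
            qed
          qed
          have "g \<notin> B k \<or> g \<notin> B l" using gB k l kl by blast
          moreover have "A k \<inter> A l = {}" using disjA k l kl .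
          ultimately show "B k \<inter> B l = {}" using BA[of k] BA[of l]
            by (auto split: if_splits)
        qed
        have psub: "A i \<subset> M" using sub[OF i] gM gi by blast
        have wi: "v (B i) > v (A i)" unfolding Bi using marg[OF psub gM gi] .
        have wj: "v (B j) > v (A i)" using Bj lt by simp
        have uj: "v (A j) > v (A i)" using mono[of "A j - {g}" "A j"] sub[OF j] lt by auto
        have "leximin_less n (\<lambda>_. v) A B"
        proof (rule LL[OF allocB], rule util_key[where a = "v (A i)" and E = "{i}" and j = j])
          show "{k. k < n \<and> v (A k) \<le> v (A i)} = {k. k < n \<and> v (B k) \<le> v (A i)} \<union> {i}"
          proof (intro set_eqI)
            fix x show "x \<in> {k. k < n \<and> v (A k) \<le> v (A i)} \<longleftrightarrow> x \<in> {k. k < n \<and> v (B k) \<le> v (A i)} \<union> {i}"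
              using i wi wj uj Bk[of x] by (cases "x = j"; cases "x = i") auto
          qed
          show "{k. k < n \<and> v (B k) \<le> v (A i)} \<inter> {i} = {}" using wi by auto
          show "\<forall>k. k < n \<and> v (B k) \<le> v (A i) \<longrightarrow> v (A k) = v (B k)"
            using wi wj Bk by (metis linorder_not_less)
        qed (use j wj in auto)
        then show False using nl[OF allocB] by simp
      qed
    qed
  qed
  have po: "pareto_optimal n M (\<lambda>_. v) A"
    unfolding pareto_optimal_def
  proof
    assume "\<exists>B. allocation n M B \<and> (\<forall>i<n. v (A i) \<le> v (B i)) \<and> (\<exists>j<n. v (A j) < v (B j))"
    then obtain B j where allocB: "allocation n M B" and ge: "\<forall>i<n. v (A i) \<le> v (B i)"
      and j: "j<n" "v (A j) < v (B j)" by blast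
    define D where "D = {i. i<n \<and> v (A i) < v (B i)}"
    define a where "a = Min ((\<lambda>i. v (A i)) ` D)"
    define E where "E = {i\<in>D. v (A i) = a}"
    have fD: "finite D" unfolding D_def by simp
    have jD: "j \<in> D" using j by (simp add: D_def)
    have aM: "a \<in> (\<lambda>i. v (A i)) ` D" unfolding a_def using fD jD by (intro Min_in) auto
    have aLe: "\<And>k. k \<in> D \<Longrightarrow> a \<le> v (A k)" unfolding a_def using fD by simp
    obtain j0 where j0: "j0 \<in> D" "v (A j0) = a" using aM by blast
    have "leximin_less n (\<lambda>_. v) A B"
    proof (rule LL[OF allocB], rule util_key[where a = a and E = E and j = j0])
      show "{k. k < n \<and> v (A k) \<le> a} = {k. k < n \<and> v (B k) \<le> a} \<union> E"
      proof (intro set_eqI iffI)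
        fix k assume "k \<in> {k. k < n \<and> v (A k) \<le> a}"
        then show "k \<in> {k. k < n \<and> v (B k) \<le> a} \<union> E"
          using aLe[of k] ge unfolding E_def D_def by force
      next
        fix k assume "k \<in> {k. k < n \<and> v (B k) \<le> a} \<union> E"
        then show "k \<in> {k. k < n \<and> v (A k) \<le> a}"
          using ge unfolding E_def D_def by force
      qed
      show "{k. k < n \<and> v (B k) \<le> a} \<inter> E = {}"
        using aLe unfolding E_def D_def by force
      show "\<forall>k\<in>E. v (A k) = a" unfolding E_def by simp
      show "E \<noteq> {}" using j0 unfolding E_def by blast
      show "\<forall>k. k < n \<and> v (B k) \<le> a \<longrightarrow> v (A k) = v (B k)"
        using aLe ge unfolding D_def by force
      show "j0 < n" using j0 by (simp add: D_def)
      show "a < v (B j0)" using j0 by (simp add: D_def)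
    qed
    then show False using nl[OF allocB] by simp
  qed
  show ?thesis using efx po by simp
qed

end
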